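(* For every integer $k \geq 2$ and every $0 < \gamma \leq 1/100$ there exists $n_0$ such that for every $n \geq n_0$ the following holds. Let $H$ be an $n$-vertex $k$-graph with $\delta_{k-1}(H) \geq n/3$, and let $G$ be the $\gamma$-diamond graph of $H$. Then $\delta(G) \geq n/10$.
   Context: $\delta_{k-1}(H)$ is the minimum over $(k-1)$-subsets $S \subseteq V(H)$ of the number of edges containing $S$. For $x, y \in V(H)$, an $(x,y)$-diamond is a pair of edges $e, f$ of $H$ with $|e \cap f| = k-1$, $x \in e\setminus f$, $y \in f \setminus e$. The $\gamma$-diamond graph of an $n$-vertex $k$-graph $H$ is the graph $G$ on $V(H)$ in which $xy \in E(G)$ if and only if $H$ contains at least $\gamma\binom{n}{k-1}$ distinct $(x,y)$-diamonds. $\delta(G)$ is the minimum degree of $G$. *)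

theory Defs
  imports Complex_Main
begin

definition kgraph :: "nat \<Rightarrow> nat \<Rightarrow> nat set set \<Rightarrow> bool" where
  "kgraph n k H \<longleftrightarrow> (\<forall>e\<in>H. e \<subseteq> {..<n} \<and> card e = k)"

definition min_codegree :: "nat \<Rightarrow> nat \<Rightarrow> nat set set \<Rightarrow> nat" where
  "min_codegree n k H = Min {card {e\<in>H. S \<subseteq> e} | S. S \<subseteq> {..<n} \<and> card S = k - 1}"

definition diamonds :: "nat \<Rightarrow> nat set set \<Rightarrow> nat \<Rightarrow> nat \<Rightarrow> (nat set \<times> nat set) set" where
  "diamonds k H x y = {(e, f). e \<in> H \<and> f \<in> H \<and> card (e \<inter> f) = k - 1 \<and> x \<in> e - f \<and> y \<in> f - e}"

definition diamond_adj :: "nat \<Rightarrow> nat \<Rightarrow> real \<Rightarrow> nat set set \<Rightarrow> nat \<Rightarrow> nat \<Rightarrow> bool" where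
  "diamond_adj n k \<gamma> H x y \<longleftrightarrow> x \<in> {..<n} \<and> y \<in> {..<n} \<and> x \<noteq> y \<and>
     real (card (diamonds k H x y)) \<ge> \<gamma> * real (n choose (k - 1))"

definition diamond_min_degree :: "nat \<Rightarrow> nat \<Rightarrow> real \<Rightarrow> nat set set \<Rightarrow> nat" where
  "diamond_min_degree n k \<gamma> H = Min ((\<lambda>x. card {y \<in> {..<n}. diamond_adj n k \<gamma> H x y}) ` {..<n})"

end

theory Submission imports Defs begin

lemma double_count:
  fixes g :: "nat set \<Rightarrow> real"
  assumes "finite U" "m \<ge> 1"
  shows "(\<Sum>S\<in>{S. S \<subseteq> U \<and> card S = m}. real m * g S)
       = (\<Sum>T\<in>{T. T \<subseteq> U \<and> card T = m - 1}. \<Sum>u\<in>U - T. g (insert u T))"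
proof -
  let ?A = "{S. S \<subseteq> U \<and> card S = m}"
  let ?B = "{T. T \<subseteq> U \<and> card T = m - 1}"
  have fA: "finite ?A" by (rule finite_subset[of _ "Pow U"]) (use assms(1) in auto)
  have fB: "finite ?B" by (rule finite_subset[of _ "Pow U"]) (use assms(1) in auto)
  have fAS: "\<forall>S\<in>?A. finite S" using assms(1) by (auto intro: finite_subset[of _ U])
  have "(\<Sum>S\<in>?A. real m * g S) = (\<Sum>S\<in>?A. \<Sum>u\<in>S. g S)"
    by (intro sum.cong) simp_all
  also have "\<dots> = (\<Sum>(S,u)\<in>Sigma ?A (\<lambda>S. S). g S)"
    using fA fAS by (rule sum.Sigma)
  also have "\<dots> = (\<Sum>(T,u)\<in>Sigma ?B (\<lambda>T. U - T). g (insert u T))"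
  proof (rule sum.reindex_bij_witness[where j = "\<lambda>(S,u). (S - {u}, u)" and i = "\<lambda>(T,u). (insert u T, u)"])
    fix p assume p: "p \<in> Sigma ?A (\<lambda>S. S)"
    obtain S u where pSu: "p = (S, u)" by (cases p)
    have S: "S \<subseteq> U" "card S = m" "u \<in> S" using p pSu by auto
    have fS: "finite S" using assms(1) S(1) by (rule finite_subset[rotated])
    have ins: "insert u (S - {u}) = S" using S(3) by blast
    show "(\<lambda>(T,u). (insert u T, u)) ((\<lambda>(S,u). (S - {u}, u)) p) = p"
      using pSu ins by simp
    have "card (S - {u}) = m - 1" using fS S by simp
    then show "(\<lambda>(S,u). (S - {u}, u)) p \<in> Sigma ?B (\<lambda>T. U - T)"
      using pSu S by auto
    show "(\<lambda>(T,u). g (insert u T)) ((\<lambda>(S,u). (S - {u}, u)) p) = (\<lambda>(S,u). g S) p"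
      using pSu ins by simp
  next
    fix p assume p: "p \<in> Sigma ?B (\<lambda>T. U - T)"
    obtain T u where pTu: "p = (T, u)" by (cases p)
    have T: "T \<subseteq> U" "card T = m - 1" "u \<in> U" "u \<notin> T" using p pTu by auto
    have fT: "finite T" using assms(1) T(1) by (rule finite_subset[rotated])
    show "(\<lambda>(S,u). (S - {u}, u)) ((\<lambda>(T,u). (insert u T, u)) p) = p"
      using pTu T(4) by simp
    have "card (insert u T) = m" using fT T assms(2) by simp
    then show "(\<lambda>(T,u). (insert u T, u)) p \<in> Sigma ?A (\<lambda>S. S)"
      using pTu T by simp
  qed
  also have "\<dots> = (\<Sum>T\<in>?B. \<Sum>u\<in>U - T. g (insert u T))"
    using fB assms(1) by (subst sum.Sigma) auto
  finally show ?thesis .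
qed
lemma codeg_le:
  assumes "kgraph n (Suc m) H" "K \<subseteq> {..<n}" "card K = m"
  shows "card {e\<in>H. K \<subseteq> e} \<le> card {v\<in>{..<n} - K. insert v K \<in> H}"
proof -
  have fK: "finite K" using assms(2) finite_subset by blast
  have "{e\<in>H. K \<subseteq> e} \<subseteq> (\<lambda>v. insert v K) ` {v\<in>{..<n} - K. insert v K \<in> H}"
  proof
    fix e assume e: "e \<in> {e\<in>H. K \<subseteq> e}"
    then have eH: "e \<in> H" "K \<subseteq> e" by auto
    have ce: "card e = Suc m" "e \<subseteq> {..<n}" using assms(1) eH unfolding kgraph_def by auto
    have fe: "finite e" using ce(2) finite_subset by blast
    have "card (e - K) = 1" using ce fK eH(2) assms(3) by (simp add: card_Diff_subset)
    then obtain v where v: "e - K = {v}" by (auto simp: card_Suc_eq)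
    then have "e = insert v K" using eH(2) by auto
    moreover have "v \<in> {..<n} - K" using v ce(2) by auto
    ultimately show "e \<in> (\<lambda>v. insert v K) ` {v\<in>{..<n} - K. insert v K \<in> H}"
      using eH by auto
  qed
  then have "card {e\<in>H. K \<subseteq> e} \<le> card ((\<lambda>v. insert v K) ` {v\<in>{..<n} - K. insert v K \<in> H})"
    by (intro card_mono) auto
  also have "\<dots> \<le> card {v\<in>{..<n} - K. insert v K \<in> H}" by (rule card_image_le) auto
  finally show ?thesis .
qed

lemma card_filter_sum:
  assumes "finite U"
  shows "real (card {y\<in>U. P y}) = (\<Sum>y\<in>U. if P y then 1 else (0::real))"
  using sum.inter_filter[OF assms, of "\<lambda>_. 1::real" P] by simp

lemma vertex_bound:
  fixes \<gamma> :: real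
  assumes kg: "kgraph n (Suc m) H" and m1: "m \<ge> 1" and mn: "m < n" and x: "x < n"
   and cod: "\<And>K. K \<subseteq> {..<n} \<Longrightarrow> card K = m \<Longrightarrow> real n / 3 \<le> real (card {e\<in>H. K \<subseteq> e})"
   and g0: "0 < \<gamma>" and g1: "\<gamma> \<le> 1/100" and n300: "n \<ge> 300"
  shows "real n / 10 \<le> real (card {y\<in>{..<n}. diamond_adj n (Suc m) \<gamma> H x y})"
proof -
  define U where "U = {..<n} - {x}"
  define A where "A = {S. S \<subseteq> U \<and> card S = m}"
  define B where "B = {T. T \<subseteq> U \<and> card T = m - 1}"
  define Y where "Y = {y\<in>{..<n}. diamond_adj n (Suc m) \<gamma> H x y}"
  define g where "g S = (if insert x S \<in> H then real (card {y\<in>U - S. insert y S \<in> H}) else 0)" for S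
  define c where "c = real (n - 1 choose (m - 1))"
  have fU: "finite U" "card U = n - 1" using x by (auto simp: U_def)
  have fA: "finite A" unfolding A_def by (rule finite_subset[of _ "Pow U"]) (use fU in auto)
  have cardA: "card A = n - 1 choose m" unfolding A_def using n_subsets[OF fU(1)] fU(2) by simp
  have cardB: "card B = n - 1 choose (m - 1)" unfolding B_def using n_subsets[OF fU(1)] fU(2) by simp
  have c0: "c > 0" using mn m1 by (simp add: c_def)
  have fH: "finite H"
  proof (rule finite_subset[of _ "Pow {..<n}"])
    show "H \<subseteq> Pow {..<n}" using kg by (auto simp: kgraph_def)
  qed simp
  have gS: "g S \<ge> real n/3 - 1" if "S \<in> A" "insert x S \<in> H" for S
  proof -
    have S: "S \<subseteq> {..<n}" "card S = m" "x \<notin> S" using that by (auto simp: A_def U_def)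
    have fin: "finite {y\<in>U - S. insert y S \<in> H}" using fU by simp
    have "real n / 3 \<le> card {e\<in>H. S \<subseteq> e}" using cod S by simp
    also have "\<dots> \<le> card {v\<in>{..<n} - S. insert v S \<in> H}" using codeg_le[OF kg S(1) S(2)] by simp
    also have "\<dots> \<le> card (insert x {y\<in>U - S. insert y S \<in> H})"
      unfolding of_nat_le_iff by (rule card_mono) (use fin in \<open>auto simp: U_def\<close>)
    also have "\<dots> \<le> card {y\<in>U - S. insert y S \<in> H} + 1"
      using fin by (simp add: card_insert_if)
    finally show ?thesis using that by (simp add: g_def)
  qed
  have gnn: "g S \<ge> 0" for S by (simp add: g_def)
  have inner: "(\<Sum>u\<in>U - T. g (insert u T)) \<ge> real n/3 * (real n/3 - 1)" if "T \<in> B" for T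
  proof -
    have T: "T \<subseteq> U" "card T = m - 1" using that by (auto simp: B_def)
    have fT: "finite T" using fU(1) T(1) by (rule finite_subset[rotated])
    have xT: "x \<notin> T" using T(1) by (auto simp: U_def)
    define K where "K = insert x T"
    have K: "K \<subseteq> {..<n}" "card K = m" using T xT fT m1 x by (auto simp: K_def U_def)
    have eqset: "{v\<in>{..<n} - K. insert v K \<in> H} = {u\<in>U - T. insert x (insert u T) \<in> H}"
      by (auto simp: K_def U_def insert_commute)
    have cnt: "real n/3 \<le> card {u\<in>U - T. insert x (insert u T) \<in> H}"
    proof -
      have "real (card {e\<in>H. K \<subseteq> e}) \<le> real (card {u\<in>U - T. insert x (insert u T) \<in> H})"
        using codeg_le[OF kg K] unfolding eqset by simp
      then show ?thesis using cod[OF K] by linarith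
    qed
    have "(\<Sum>u\<in>U - T. if insert x (insert u T) \<in> H then real n/3 - 1 else 0) \<le> (\<Sum>u\<in>U - T. g (insert u T))"
    proof (rule sum_mono)
      fix u assume u: "u \<in> U - T"
      have "insert u T \<in> A" using u T fT m1 by (auto simp: A_def)
      then show "(if insert x (insert u T) \<in> H then real n/3 - 1 else 0) \<le> g (insert u T)"
        using gS[of "insert u T"] gnn[of "insert u T"] by (cases "insert x (insert u T) \<in> H") simp_all
    qed
    moreover have "(\<Sum>u\<in>U - T. if insert x (insert u T) \<in> H then real n/3 - 1 else 0)
        = real (card {u\<in>U - T. insert x (insert u T) \<in> H}) * (real n/3 - 1)"
      using sum.inter_filter[of "U - T" "\<lambda>_. real n/3 - 1" "\<lambda>u. insert x (insert u T) \<in> H"] fU(1)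
      by simp
    moreover have "real n/3 * (real n/3 - 1) \<le> real (card {u\<in>U - T. insert x (insert u T) \<in> H}) * (real n/3 - 1)"
      using cnt n300 by (intro mult_right_mono) auto
    ultimately show ?thesis by linarith
  qed
  have lower: "c * (real n/3 * (real n/3 - 1)) \<le> real m * (\<Sum>S\<in>A. g S)"
  proof -
    have "real m * (\<Sum>S\<in>A. g S) = (\<Sum>S\<in>A. real m * g S)" by (simp add: sum_distrib_left)
    also have "\<dots> = (\<Sum>T\<in>B. \<Sum>u\<in>U - T. g (insert u T))"
      unfolding A_def B_def by (rule double_count[OF fU(1) m1])
    also have "\<dots> \<ge> (\<Sum>T\<in>B. real n/3 * (real n/3 - 1))" by (intro sum_mono inner)
    finally show ?thesis using cardB by (simp add: c_def)
  qed
  define D where "D y = card {S\<in>A. y \<notin> S \<and> insert x S \<in> H \<and> insert y S \<in> H}" for y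
  have swap: "(\<Sum>S\<in>A. g S) = (\<Sum>y\<in>U. real (D y))"
  proof -
    have "(\<Sum>S\<in>A. g S) = (\<Sum>S\<in>A. \<Sum>y\<in>U. if y \<notin> S \<and> insert x S \<in> H \<and> insert y S \<in> H then 1 else (0::real))"
    proof (rule sum.cong[OF refl])
      fix S assume "S \<in> A"
      have "{y\<in>U - S. insert y S \<in> H} = {y\<in>U. y \<notin> S \<and> insert y S \<in> H}" by auto
      then show "g S = (\<Sum>y\<in>U. if y \<notin> S \<and> insert x S \<in> H \<and> insert y S \<in> H then 1 else (0::real))"
        using card_filter_sum[OF fU(1), of "\<lambda>y. y \<notin> S \<and> insert y S \<in> H"]
        by (auto simp: g_def)
    qed
    also have "\<dots> = (\<Sum>y\<in>U. \<Sum>S\<in>A. if y \<notin> S \<and> insert x S \<in> H \<and> insert y S \<in> H then 1 else (0::real))"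
      by (rule sum.swap)
    also have "\<dots> = (\<Sum>y\<in>U. real (D y))"
      unfolding D_def using card_filter_sum[OF fA] by simp
    finally show ?thesis .
  qed
  have Dd: "D y \<le> card (diamonds (Suc m) H x y)" if "y \<in> U" for y
  proof -
    have xy: "x \<noteq> y" using that by (auto simp: U_def)
    have fd: "finite (diamonds (Suc m) H x y)"
      by (rule finite_subset[of _ "H \<times> H"]) (use fH in \<open>auto simp: diamonds_def\<close>)
    show ?thesis unfolding D_def
    proof (rule card_inj_on_le[OF _ _ fd])
      show "inj_on (\<lambda>S. (insert x S, insert y S)) {S\<in>A. y \<notin> S \<and> insert x S \<in> H \<and> insert y S \<in> H}"
      proof (rule inj_onI)
        fix S S' assume S: "S \<in> {S\<in>A. y \<notin> S \<and> insert x S \<in> H \<and> insert y S \<in> H}"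
          and S': "S' \<in> {S\<in>A. y \<notin> S \<and> insert x S \<in> H \<and> insert y S \<in> H}"
          and eq: "(insert x S, insert y S) = (insert x S', insert y S')"
        have "x \<notin> S" "x \<notin> S'" using S S' by (auto simp: A_def U_def)
        then show "S = S'" using eq by (metis Pair_inject insert_ident)
      qed
      show "(\<lambda>S. (insert x S, insert y S)) ` {S\<in>A. y \<notin> S \<and> insert x S \<in> H \<and> insert y S \<in> H} \<subseteq> diamonds (Suc m) H x y"
      proof
        fix p assume "p \<in> (\<lambda>S. (insert x S, insert y S)) ` {S\<in>A. y \<notin> S \<and> insert x S \<in> H \<and> insert y S \<in> H}"
        then obtain S where S: "S \<in> A" "y \<notin> S" "insert x S \<in> H" "insert y S \<in> H" and p: "p = (insert x S, insert y S)"
          by auto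
        have xS: "x \<notin> S" using S(1) by (auto simp: A_def U_def)
        have "insert x S \<inter> insert y S = S" using xS S(2) xy by auto
        then have "card (insert x S \<inter> insert y S) = m" using S(1) by (simp add: A_def)
        then show "p \<in> diamonds (Suc m) H x y" using S xS xy p by (simp add: diamonds_def)
      qed
    qed
  qed
  have DA: "D y \<le> card A" for y unfolding D_def by (rule card_mono[OF fA]) auto
  have YU: "Y \<subseteq> U" by (auto simp: Y_def U_def diamond_adj_def)
  have upper: "(\<Sum>y\<in>U. real (D y)) \<le> real (card Y) * real (card A) + real n * (\<gamma> * real (n choose m))"
  proof -
    have "(\<Sum>y\<in>U. real (D y)) = (\<Sum>y\<in>U - Y. real (D y)) + (\<Sum>y\<in>Y. real (D y))"
      by (rule sum.subset_diff[OF YU fU(1)])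
    moreover have "(\<Sum>y\<in>Y. real (D y)) \<le> real (card Y) * real (card A)"
      by (rule sum_bounded_above) (simp add: DA)
    moreover have "(\<Sum>y\<in>U - Y. real (D y)) \<le> real (card (U - Y)) * (\<gamma> * real (n choose m))"
    proof (rule sum_bounded_above)
      fix y assume y: "y \<in> U - Y"
      then have "\<not> diamond_adj n (Suc m) \<gamma> H x y" "y < n" by (auto simp: Y_def U_def)
      then have "real (card (diamonds (Suc m) H x y)) < \<gamma> * real (n choose m)"
        using y x by (auto simp: diamond_adj_def U_def)
      moreover have "D y \<le> card (diamonds (Suc m) H x y)" using Dd y by auto
      ultimately show "real (D y) \<le> \<gamma> * real (n choose m)" by linarith
    qed
    moreover have "real (card (U - Y)) * (\<gamma> * real (n choose m)) \<le> real n * (\<gamma> * real (n choose m))"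
    proof (rule mult_right_mono)
      have "card (U - Y) \<le> card U" by (rule card_mono) (use fU in auto)
      then show "real (card (U - Y)) \<le> real n" using fU(2) by simp
      show "0 \<le> \<gamma> * real (n choose m)" using g0 by simp
    qed
    ultimately show ?thesis by linarith
  qed
  have b1: "real m * real (card A) \<le> real n * c"
  proof -
    have "m * (n - 1 choose m) = (n - 1) * (n - 1 - 1 choose (m - 1))"
      using m1 by (simp add: times_binomial_minus1_eq)
    also have "\<dots> \<le> n * (n - 1 choose (m - 1))"
      by (intro mult_mono binomial_right_mono) auto
    finally show ?thesis unfolding c_def cardA by (metis of_nat_le_iff of_nat_mult)
  qed
  have b2: "real m * real (n choose m) = real n * c"
  proof -
    have "m * (n choose m) = n * (n - 1 choose (m - 1))"
      using m1 by (simp add: times_binomial_minus1_eq)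
    then show ?thesis unfolding c_def by (metis of_nat_mult)
  qed
  have "c * (real n/3 * (real n/3 - 1)) \<le> real m * (real (card Y) * real (card A) + real n * (\<gamma> * real (n choose m)))"
    using lower swap upper m1 by (smt (verit) mult_left_mono of_nat_0_le_iff)
  also have "\<dots> = real (card Y) * (real m * real (card A)) + real n * \<gamma> * (real m * real (n choose m))"
    by (simp add: algebra_simps)
  also have "\<dots> \<le> real (card Y) * (real n * c) + real n * \<gamma> * (real n * c)"
    using b1 b2 g0 by (intro add_mono mult_left_mono) auto
  also have "\<dots> = c * (real n * (real (card Y) + \<gamma> * real n))"
    by (simp add: algebra_simps)
  finally have "real n/3 * (real n/3 - 1) \<le> real n * (real (card Y) + \<gamma> * real n)"
    using mult_le_cancel_left_pos[OF c0] by blast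
  moreover have "real n/3 * (real n/3 - 1) = real n * ((real n/3 - 1)/3)"
    by (simp add: field_simps)
  ultimately have "real n * ((real n/3 - 1)/3) \<le> real n * (real (card Y) + \<gamma> * real n)"
    by linarith
  then have "(real n/3 - 1)/3 \<le> real (card Y) + \<gamma> * real n"
    using n300 by simp
  moreover have "\<gamma> * real n \<le> real n / 100" using mult_right_mono[OF g1, of "real n"] by simp
  moreover have "real n \<ge> 300" using n300 by simp
  moreover have "(real n/3 - 1)/3 = real n/9 - 1/3" by simp
  ultimately have "real n / 10 \<le> real (card Y)" by linarith
  then show ?thesis unfolding Y_def .
qed


theorem lemma7p1:
  fixes k :: nat and \<gamma> :: real
  assumes "k \<ge> 2" and "0 < \<gamma>" and "\<gamma> \<le> 1/100"
  shows "\<exists>n0::nat. \<forall>n \<ge> n0. \<forall>H :: nat set set.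
           kgraph n k H \<and> real (min_codegree n k H) \<ge> real n / 3
           \<longrightarrow> real (diamond_min_degree n k \<gamma> H) \<ge> real n / 10"
proof (intro exI allI impI)
  fix n :: nat and H :: "nat set set"
  assume n: "max 300 (k + 1) \<le> n"
  assume hyp: "kgraph n k H \<and> real (min_codegree n k H) \<ge> real n / 3"
  define m where "m = k - 1"
  have k: "k = Suc m" using assms(1) by (simp add: m_def)
  have kg: "kgraph n (Suc m) H" using hyp k by simp
  have m1: "m \<ge> 1" using assms(1) by (simp add: m_def)
  have mn: "m < n" using n by (simp add: m_def)
  have n300: "n \<ge> 300" using n by simp
  have cod: "real n / 3 \<le> real (card {e\<in>H. K \<subseteq> e})" if K: "K \<subseteq> {..<n}" "card K = m" for K
  proof -
    have eq: "{card {e\<in>H. S \<subseteq> e} | S. S \<subseteq> {..<n} \<and> card S = k - 1}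
        = (\<lambda>S. card {e\<in>H. S \<subseteq> e}) ` {S. S \<subseteq> {..<n} \<and> card S = k - 1}" by blast
    have fin: "finite {S. S \<subseteq> {..<n} \<and> card S = k - 1}"
      by (rule finite_subset[of _ "Pow {..<n}"]) auto
    have "min_codegree n k H \<le> card {e\<in>H. K \<subseteq> e}"
      unfolding min_codegree_def eq
      by (rule Min_le) (use fin K in \<open>auto simp: m_def\<close>)
    then show ?thesis using hyp by linarith
  qed
  have "diamond_min_degree n k \<gamma> H \<in> (\<lambda>x. card {y \<in> {..<n}. diamond_adj n k \<gamma> H x y}) ` {..<n}"
    unfolding diamond_min_degree_def by (rule Min_in) (use n300 in \<open>auto simp: lessThan_empty_iff\<close>)
  then obtain x where x: "x < n"
    and eqx: "diamond_min_degree n k \<gamma> H = card {y \<in> {..<n}. diamond_adj n k \<gamma> H x y}" by auto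
  show "real n / 10 \<le> real (diamond_min_degree n k \<gamma> H)"
    using vertex_bound[OF kg m1 mn x cod assms(2) assms(3) n300] unfolding eqx k[symmetric] by simp
qed

end
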